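(* Fix integers $k,l\geq 2$, $m\ge 1$, $a\in\mathbb{Z}$, a polynomial $R(x_1,\dots,x_m)\in\mathbb{Z}[x_1,\dots,x_m]$, and integers $0\le s\le r$ with $r\ge1$. Let $P(x)=(x-a)^e\prod_{j=1}^t P_j(x)^{e_j}\in\mathbb{Z}[x]$ with $e\geq1$, $e_j\ge1$, where $P_1,\dots,P_t\in\mathbb{Z}[x]$ are distinct irreducible polynomials. Then the equation $$P(x)=\prod_{i=1}^s n_i!\cdot\prod_{i=s+1}^r n_i!!$$ has only finitely many solutions $(n_1,\dots,n_r,x)$ with $n_1,\dots,n_r$ positive integers and $x\in S_{a,R}$.
   Context: For a positive integer $x=\prod_{i\in I}p_i^{\alpha_i}$, $K(x)=\max_{i\in I}\alpha_i$ (with $K(1)=0$) and $\omega(x)=|I|$. $\mathcal{F}_k=\{x\in\mathbb{N}: K(x)<k\}$, $\mathcal{P}_l=\{x\in\mathbb{N}:\omega(x)<l\}$, and $\mathcal{F}_k\mathcal{P}_l=\{yz: y\in\mathcal{F}_k, z\in\mathcal{P}_l\}$. $S_{a,R}=\{x_1\cdots x_m\cdot R(x_1,\dots,x_m)+a : x_1,\dots,x_m\in\mathcal{F}_k\mathcal{P}_l\}$. $n!!$ is the double factorial. *)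

theory Defs
  imports "HOL-Computational_Algebra.Computational_Algebra"
begin

definition Kexp :: "nat \<Rightarrow> nat" where
  "Kexp x = Max (insert 0 ((\<lambda>p. multiplicity p x) ` prime_factors x))"

definition omega :: "nat \<Rightarrow> nat" where
  "omega x = card (prime_factors x)"

definition Fk :: "nat \<Rightarrow> nat set" where
  "Fk k = {x. x > 0 \<and> Kexp x < k}"

definition Pl :: "nat \<Rightarrow> nat set" where
  "Pl l = {x. x > 0 \<and> omega x < l}"

definition FkPl :: "nat \<Rightarrow> nat \<Rightarrow> nat set" where
  "FkPl k l = {y * z | y z. y \<in> Fk k \<and> z \<in> Pl l}"

(* A polynomial in Z[x_1,...,x_m] is represented as a finite list of monomials
   (c, e), meaning c * x_1^(e 0) * ... * x_m^(e (m-1)). Variables x_{i+1} = xs ! i. *)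
definition mpoly_eval :: "nat \<Rightarrow> (int \<times> (nat \<Rightarrow> nat)) list \<Rightarrow> int list \<Rightarrow> int" where
  "mpoly_eval m R xs = (\<Sum>(c, e) \<leftarrow> R. c * (\<Prod>i<m. (xs ! i) ^ e i))"

definition S_set :: "nat \<Rightarrow> nat \<Rightarrow> nat \<Rightarrow> int \<Rightarrow> (int \<times> (nat \<Rightarrow> nat)) list \<Rightarrow> int set" where
  "S_set k l m a R = {int (prod_list xs) * mpoly_eval m R (map int xs) + a
                       | xs. length xs = m \<and> set xs \<subseteq> FkPl k l}"

fun dfact :: "nat \<Rightarrow> nat" where
  "dfact 0 = 1"
| "dfact (Suc 0) = 1"
| "dfact (Suc (Suc n)) = Suc (Suc n) * dfact n"

end

theory Submission
  imports Defs
begin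


lemma dfact_pos: "dfact n > 0"
  by (induction n rule: dfact.induct) auto

lemma dfact_mult: "dfact (Suc n) * dfact n = fact (Suc n)"
proof (induction n)
  case 0 then show ?case by simp
next
  case (Suc n)
  have "dfact (Suc (Suc n)) * dfact (Suc n) = Suc (Suc n) * (dfact (Suc n) * dfact n)"
    by (simp add: algebra_simps)
  also have "\<dots> = fact (Suc (Suc n))" using Suc by (simp add: fact_Suc[of "Suc n"])
  finally show ?case .
qed

lemma dfact_mono: "dfact n \<le> dfact (Suc n)"
proof (induction n rule: dfact.induct)
  case (3 n)
  have "dfact (Suc (Suc n)) = Suc (Suc n) * dfact n" by simp
  also have "\<dots> \<le> Suc (Suc (Suc n)) * dfact (Suc n)" using 3 by (intro mult_mono) auto
  finally show ?case by simp
qed auto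

lemma fact_le_dfact_sq: "fact n \<le> dfact n ^ 2"
proof (cases n)
  case (Suc m)
  have "fact n = dfact (Suc m) * dfact m" using dfact_mult[of m] Suc by simp
  also have "\<dots> \<le> dfact (Suc m) * dfact (Suc m)" using dfact_mono[of m] by simp
  finally show ?thesis using Suc by (simp add: power2_eq_square)
qed simp

lemma dfact_dvd_fact: "dfact n dvd fact n"
proof (cases n)
  case (Suc m)
  then show ?thesis using dfact_mult[of m] by (metis dvd_triv_left)
qed simp

lemma four_mult_le: "4 * p \<le> (4::nat) ^ p"
proof (induction p)
  case (Suc p)
  then show ?case by (cases p) auto
qed simp

lemma fact_Suc_nat': "(fact (Suc n) :: nat) = Suc n * fact n"
  using fact_Suc[of n, where 'a=nat] by (simp only: of_nat_id)

lemma mult_fact_Suc: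
  assumes p: "prime (p::nat)"
  shows "multiplicity p (fact (Suc n) :: nat) = multiplicity p (Suc n) + multiplicity p (fact n :: nat)"
proof -
  have "multiplicity p (Suc n * fact n :: nat) = multiplicity p (Suc n) + multiplicity p (fact n :: nat)"
    using p by (intro prime_elem_multiplicity_mult_distrib) auto
  then show ?thesis by (simp only: fact_Suc_nat')
qed

lemma mult_fact_rec:
  assumes p: "prime (p::nat)"
  shows "multiplicity p (fact n :: nat) = n div p + multiplicity p (fact (n div p) :: nat)"
proof (induction n)
  case 0 then show ?case by simp
next
  case (Suc n)
  have p0: "p \<noteq> 0" and p1: "p > 1" using p prime_gt_1_nat by auto
  note m = mult_fact_Suc[OF p, of n]
  show ?case
  proof (cases "p dvd Suc n")
    case True
    then obtain q where q: "Suc n = p * q" by blast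
    have q0: "q > 0" using q by (cases q) auto
    then obtain q' where q': "q = Suc q'" by (cases q) auto
    have d1: "Suc n div p = q" using q p0 by simp
    have d2: "n div p = q'"
    proof -
      have "Suc n mod p = 0" using True by simp
      then have "Suc n div p = Suc (n div p)" using div_Suc[of n p] by presburger
      then show ?thesis using d1 q' by simp
    qed
    have mq: "multiplicity p (fact q :: nat) = multiplicity p q + multiplicity p (fact q' :: nat)"
      using mult_fact_Suc[OF p, of q'] q' by simp
    have ms: "multiplicity p (Suc n) = Suc (multiplicity p q)"
      unfolding q using q0 p1 by (intro multiplicity_times_same) auto
    have IH: "multiplicity p (fact n :: nat) = q' + multiplicity p (fact q' :: nat)"
      using Suc.IH d2 by simp
    have "multiplicity p (fact (Suc n) :: nat) = Suc (multiplicity p q) + (q' + multiplicity p (fact q' :: nat))"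
      using m ms IH by simp
    also have "\<dots> = q + multiplicity p (fact q :: nat)" using mq q' by simp
    finally show ?thesis using d1 by simp
  next
    case False
    then have "multiplicity p (Suc n) = 0" by (simp add: not_dvd_imp_multiplicity_0)
    moreover have "Suc n mod p \<noteq> 0" using False by (simp add: dvd_eq_mod_eq_0)
    then have "Suc n div p = n div p" using div_Suc[of n p] by presburger
    ultimately show ?thesis using m Suc.IH by simp
  qed
qed

lemma ppart_fact_le:
  assumes p: "prime (p::nat)"
  shows "p ^ multiplicity p (fact n) \<le> 4 ^ n"
proof (induction n rule: less_induct)
  case (less n)
  show ?case
  proof (cases "n = 0")
    case True then show ?thesis by simp
  next
    case False
    define q where "q = n div p"
    have p1: "p > 1" using p prime_gt_1_nat by auto
    have qn: "q < n" using False p1 unfolding q_def by simp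
    have "p ^ multiplicity p (fact n) = p ^ q * p ^ multiplicity p (fact q)"
      using mult_fact_rec[OF p, of n] unfolding q_def by (simp add: power_add)
    also have "\<dots> \<le> p ^ q * 4 ^ q" using less[OF qn] by simp
    also have "\<dots> = (4 * p) ^ q" by (simp add: power_mult_distrib)
    also have "\<dots> \<le> (4 ^ p) ^ q" using four_mult_le[of p] by (intro power_mono) auto
    also have "\<dots> = 4 ^ (p * q)" by (simp add: power_mult)
    also have "\<dots> \<le> 4 ^ n" using p1 unfolding q_def
      by (intro power_increasing) (auto simp: mult.commute)
    finally show ?thesis .
  qed
qed



definition primorial :: "nat \<Rightarrow> nat" where
  "primorial n = (\<Prod>{p. prime p \<and> p \<le> n})"

lemma primes_prod_dvd:
  assumes "finite A" "\<forall>p\<in>A. prime (p::nat) \<and> p dvd x"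
  shows "\<Prod>A dvd x"
  using assms
proof (induction A rule: finite_induct)
  case (insert p A)
  have "coprime p (\<Prod>A)"
    using insert by (intro prod_coprime_right) (metis insert_iff primes_coprime)
  then show ?case using insert by (simp add: divides_mult)
qed simp

lemma binom_le: "(2*m+1) choose m \<le> (4::nat) ^ m"
proof -
  have s: "(2*m+1) choose m = (2*m+1) choose (m+1)"
    by (subst binomial_symmetric) auto
  have "((2*m+1) choose m) + ((2*m+1) choose (m+1)) = (\<Sum>k\<in>{m, m+1}. (2*m+1) choose k)" by simp
  also have "\<dots> \<le> (\<Sum>k\<le>2*m+1. (2*m+1) choose k)" by (intro sum_mono2) auto
  also have "\<dots> = 2 ^ (2*m+1)" by (rule choose_row_sum)
  finally have "2 * ((2*m+1) choose m) \<le> 2 * 4 ^ m" using s by (simp add: power_mult)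
  then show ?thesis by simp
qed

lemma primorial_le: "primorial n \<le> 4 ^ n"
proof (induction n rule: less_induct)
  case (less n)
  show ?case
  proof (cases "n \<le> 2")
    case True
    have n3: "n = 0 \<or> n = 1 \<or> n = 2" using True by auto
    have e01: "{p. prime p \<and> p \<le> n} = {}" if "n < 2" for n :: nat
    proof -
      have "\<not> (prime p \<and> p \<le> n)" for p :: nat
      proof
        assume "prime p \<and> p \<le> n"
        then have "2 \<le> p" "p \<le> n" using prime_ge_2_nat by blast+
        then show False using that by linarith
      qed
      then show ?thesis by blast
    qed
    have e2: "{p. prime p \<and> p \<le> (2::nat)} = {2}"
    proof (intro set_eqI iffI)
      fix p :: nat assume "p \<in> {p. prime p \<and> p \<le> 2}"
      then have "prime p" "p \<le> 2" by auto
      then show "p \<in> {2}" using prime_ge_2_nat[of p] by simp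
    qed (simp add: two_is_prime_nat)
    show ?thesis
    proof (cases "n = 2")
      case True then show ?thesis unfolding primorial_def using e2 by simp
    next
      case False
      then have "n < 2" using n3 by auto
      then show ?thesis unfolding primorial_def e01[OF \<open>n < 2\<close>] by simp
    qed
  next
    case False
    show ?thesis
    proof (cases "even n")
      case True
      have "\<not> prime n" using True False prime_odd_nat[of n] by auto
      have "{p. prime p \<and> p \<le> n} = {p. prime p \<and> p \<le> n - 1}"
      proof (intro set_eqI iffI)
        fix p assume "p \<in> {p. prime p \<and> p \<le> n}"
        then have "prime p" "p \<le> n" by auto
        moreover have "p \<noteq> n" using \<open>\<not> prime n\<close> \<open>prime p\<close> by auto
        ultimately show "p \<in> {p. prime p \<and> p \<le> n - 1}" by simp
      qed auto
      then have "primorial n = primorial (n - 1)" unfolding primorial_def by simp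
      also have "\<dots> \<le> 4 ^ (n - 1)" using less False by simp
      also have "\<dots> \<le> 4 ^ n" by (intro power_increasing) auto
      finally show ?thesis .
    next
      case odd: False
      then obtain m where n: "n = 2*m+1" using oddE by blast
      have m1: "m \<ge> 1" using n False by simp
      define A where "A = {p. prime p \<and> p \<le> m+1}"
      define B where "B = {p. prime p \<and> m+1 < p \<and> p \<le> 2*m+1}"
      have fA: "finite A" and fB: "finite B" unfolding A_def B_def by auto
      have "{p. prime p \<and> p \<le> n} = A \<union> B" unfolding A_def B_def n by auto
      then have eq: "primorial n = \<Prod>A * \<Prod>B"
        unfolding primorial_def using fA fB
        by (simp add: prod.union_disjoint A_def B_def disjoint_iff)
      have PA: "\<Prod>A \<le> 4 ^ (m+1)"
        using less[of "m+1"] n m1 unfolding primorial_def A_def by simp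
      have PB: "\<Prod>B \<le> 4 ^ m"
      proof -
        have "\<Prod>B dvd ((2*m+1) choose m)"
        proof (intro primes_prod_dvd fB ballI conjI)
          fix p assume p: "p \<in> B"
          then show pr: "prime p" unfolding B_def by simp
          have "p \<le> 2*m+1" using p unfolding B_def by simp
          then have "p dvd fact (2*m+1)" using prime_dvd_fact_iff[OF pr] by blast
          then have "p dvd fact m * fact (m+1) * ((2*m+1) choose m)"
            using binomial_fact_lemma[of m "2*m+1"]
            by (simp add: Suc_diff_le numeral_2_eq_2)
          moreover have "m + 1 < p" using p unfolding B_def by simp
          then have "\<not> p \<le> m" "\<not> p \<le> m+1" by simp_all
          then have "\<not> p dvd fact m" "\<not> p dvd fact (m+1)"
            using prime_dvd_fact_iff[OF pr] by blast+
          ultimately show "p dvd ((2*m+1) choose m)" using pr by (simp add: prime_dvd_mult_iff)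
        qed
        then have "\<Prod>B \<le> (2*m+1) choose m"
          by (intro dvd_imp_le) (auto simp: zero_less_binomial_iff)
        then show ?thesis using binom_le[of m] by simp
      qed
      have "primorial n \<le> 4^(m+1) * 4^m" unfolding eq using PA PB by (rule mult_le_mono)
      also have "\<dots> = 4 ^ n" using n by (simp add: power_add[symmetric])
      finally show ?thesis .
    qed
  qed
qed



lemma Fk_bound:
  assumes y: "y \<in> Fk k" and dv: "y dvd fact n ^ r"
  shows "y \<le> 4 ^ (n * (k - 1))"
proof -
  have y0: "y > 0" and K: "Kexp y < k" using y unfolding Fk_def by auto
  have mle: "multiplicity p y \<le> k - 1" if "p \<in> prime_factors y" for p
  proof -
    have "multiplicity p y \<le> Kexp y" unfolding Kexp_def
      using that by (intro Max_ge) auto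
    then show ?thesis using K by simp
  qed
  have sub: "prime_factors y \<subseteq> {p. prime p \<and> p \<le> n}"
  proof
    fix p assume p: "p \<in> prime_factors y"
    then have pr: "prime p" and "p dvd y" by (auto simp: in_prime_factors_iff)
    then have "p dvd fact n ^ r" using dv dvd_trans by blast
    then have "p dvd fact n" using pr prime_dvd_power by blast
    then show "p \<in> {p. prime p \<and> p \<le> n}" using pr prime_dvd_fact_iff by auto
  qed
  have "y = (\<Prod>p\<in>prime_factors y. p ^ multiplicity p y)" using prime_factorization_nat y0 by blast
  also have "\<dots> \<le> (\<Prod>p\<in>prime_factors y. p ^ (k - 1))"
  proof (intro prod_mono conjI)
    fix p assume "p \<in> prime_factors y"
    then show "p ^ multiplicity p y \<le> p ^ (k - 1)"
      using mle by (intro power_increasing) (auto simp: in_prime_factors_iff prime_gt_0_nat Suc_leI)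
  qed simp
  also have "\<dots> = (\<Prod>(prime_factors y)) ^ (k - 1)" by (simp add: prod_power_distrib)
  also have "\<dots> \<le> primorial n ^ (k - 1)"
  proof (intro power_mono)
    have "\<Prod>(prime_factors y) dvd primorial n" unfolding primorial_def
      using sub by (intro prod_dvd_prod_subset) auto
    moreover have "primorial n > 0" unfolding primorial_def
      by (intro prod_pos) (auto simp: prime_gt_0_nat Suc_leI)
    ultimately show "\<Prod>(prime_factors y) \<le> primorial n" by (intro dvd_imp_le)
  qed simp
  also have "\<dots> \<le> (4 ^ n) ^ (k - 1)" using primorial_le by (intro power_mono) auto
  finally show ?thesis by (simp add: power_mult)
qed

lemma Pl_bound:
  assumes z: "z \<in> Pl l" and dv: "z dvd fact n ^ r"
  shows "z \<le> 4 ^ (n * r * (l - 1))"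
proof -
  have z0: "z > 0" and om: "card (prime_factors z) < l" using z unfolding Pl_def omega_def by auto
  have F0: "fact n ^ r \<noteq> (0::nat)" by simp
  have "z = (\<Prod>p\<in>prime_factors z. p ^ multiplicity p z)" using prime_factorization_nat z0 by blast
  also have "\<dots> \<le> (\<Prod>p\<in>prime_factors z. 4 ^ (n * r))"
  proof (intro prod_mono conjI)
    fix p assume pz: "p \<in> prime_factors z"
    then have pr: "prime p" by (auto simp: in_prime_factors_iff)
    have "p ^ multiplicity p z \<le> p ^ multiplicity p (fact n ^ r)"
      using dvd_imp_multiplicity_le[OF dv F0] pr by (intro power_increasing) (auto simp: prime_gt_0_nat Suc_leI)
    also have "\<dots> = (p ^ multiplicity p (fact n)) ^ r"
      using pr by (simp add: prime_elem_multiplicity_power_distrib power_mult[symmetric] mult.commute)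
    also have "\<dots> \<le> (4 ^ n) ^ r" using ppart_fact_le[OF pr] by (intro power_mono) auto
    finally show "p ^ multiplicity p z \<le> 4 ^ (n * r)" by (simp add: power_mult)
  qed simp
  also have "\<dots> = (4 ^ (n * r)) ^ card (prime_factors z)" by simp
  also have "\<dots> \<le> (4 ^ (n * r)) ^ (l - 1)" using om by (intro power_increasing) auto
  finally show ?thesis by (simp add: power_mult)
qed

lemma FkPl_bound:
  assumes d: "d \<in> FkPl k l" and dv: "d dvd fact n ^ r"
  shows "d \<le> (4 ^ ((k - 1) + r * (l - 1))) ^ n"
proof -
  obtain y z where d: "d = y * z" and y: "y \<in> Fk k" and z: "z \<in> Pl l"
    using d unfolding FkPl_def by auto
  have "y \<le> 4 ^ (n * (k - 1))" using Fk_bound[OF y] dv d dvd_mult_left by blast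
  moreover have "z \<le> 4 ^ (n * r * (l - 1))" using Pl_bound[OF z] dv d dvd_mult_right by blast
  ultimately have "d \<le> 4 ^ (n * (k - 1)) * 4 ^ (n * r * (l - 1))" using d by (simp add: mult_le_mono)
  also have "\<dots> = (4 ^ ((k - 1) + r * (l - 1))) ^ n"
    by (simp add: power_add[symmetric] power_mult[symmetric] algebra_simps)
  finally show ?thesis .
qed



lemma growth:
  fixes K L :: real
  shows "\<exists>n0. \<forall>n\<ge>n0. K * L ^ n < fact n"
proof -
  have "summable (\<lambda>n. \<bar>L\<bar> ^ n /\<^sub>R fact n)" using exp_converges sums_summable by blast
  then have "(\<lambda>n. \<bar>L\<bar> ^ n /\<^sub>R fact n) \<longlonglongrightarrow> 0" by (rule summable_LIMSEQ_zero)
  then have lim: "(\<lambda>n. (\<bar>K\<bar> + 1) * (\<bar>L\<bar> ^ n /\<^sub>R fact n)) \<longlonglongrightarrow> (\<bar>K\<bar> + 1) * 0"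
    by (intro tendsto_mult tendsto_const)
  then have "eventually (\<lambda>n. (\<bar>K\<bar> + 1) * (\<bar>L\<bar> ^ n /\<^sub>R fact n) < 1) sequentially"
    using order_tendstoD(2)[OF lim, of 1] by simp
  then obtain n0 where n0: "\<And>n. n \<ge> n0 \<Longrightarrow> (\<bar>K\<bar> + 1) * (\<bar>L\<bar> ^ n /\<^sub>R fact n) < 1"
    unfolding eventually_sequentially by blast
  have "K * L ^ n < fact n" if "n \<ge> n0" for n
  proof -
    have f: "(fact n :: real) > 0" by simp
    have "(\<bar>K\<bar> + 1) * \<bar>L\<bar> ^ n < fact n"
      using n0[OF that] f by (simp add: divide_simps mult.commute)
    moreover have "K * L ^ n \<le> (\<bar>K\<bar> + 1) * \<bar>L\<bar> ^ n"
    proof -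
      have "K * L ^ n \<le> \<bar>K * L ^ n\<bar>" by simp
      also have "\<dots> = \<bar>K\<bar> * \<bar>L\<bar> ^ n" by (simp add: abs_mult power_abs)
      also have "\<dots> \<le> (\<bar>K\<bar> + 1) * \<bar>L\<bar> ^ n" by (intro mult_right_mono) auto
      finally show ?thesis .
    qed
    ultimately show ?thesis by linarith
  qed
  then show ?thesis by blast
qed

lemma growth_int:
  fixes K L :: int
  shows "\<exists>n0. \<forall>n. int (fact n) \<le> K * L ^ n \<longrightarrow> n < n0"
proof -
  obtain n0 where n0: "\<And>n. n \<ge> n0 \<Longrightarrow> real_of_int K * real_of_int L ^ n < fact n"
    using growth by blast
  have "n < n0" if "int (fact n) \<le> K * L ^ n" for n
  proof (rule ccontr)
    assume "\<not> n < n0"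
    then have "real_of_int K * real_of_int L ^ n < fact n" using n0 by simp
    moreover have "real_of_int (int (fact n)) \<le> real_of_int (K * L ^ n)" using that by linarith
    ultimately show False by simp
  qed
  then show ?thesis by blast
qed

lemma poly_bound:
  fixes p :: "int poly"
  shows "\<bar>poly p x\<bar> \<le> (\<Sum>i\<le>degree p. \<bar>coeff p i\<bar>) * (max 1 \<bar>x\<bar>) ^ degree p"
proof -
  have "\<bar>poly p x\<bar> = \<bar>\<Sum>i\<le>degree p. coeff p i * x ^ i\<bar>" by (simp add: poly_altdef)
  also have "\<dots> \<le> (\<Sum>i\<le>degree p. \<bar>coeff p i * x ^ i\<bar>)" by (rule sum_abs)
  also have "\<dots> \<le> (\<Sum>i\<le>degree p. \<bar>coeff p i\<bar> * (max 1 \<bar>x\<bar>) ^ degree p)"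
  proof (intro sum_mono)
    fix i assume i: "i \<in> {..degree p}"
    have "\<bar>x\<bar> ^ i \<le> (max 1 \<bar>x\<bar>) ^ i" by (intro power_mono) auto
    also have "\<dots> \<le> (max 1 \<bar>x\<bar>) ^ degree p" using i by (intro power_increasing) auto
    finally show "\<bar>coeff p i * x ^ i\<bar> \<le> \<bar>coeff p i\<bar> * (max 1 \<bar>x\<bar>) ^ degree p"
      by (simp add: abs_mult power_abs mult_left_mono)
  qed
  also have "\<dots> = (\<Sum>i\<le>degree p. \<bar>coeff p i\<bar>) * (max 1 \<bar>x\<bar>) ^ degree p"
    by (simp add: sum_distrib_right)
  finally show ?thesis .
qed

lemma mpoly_bound:
  fixes T :: int
  assumes T: "T \<ge> 1" and ys: "\<And>i. i < m \<Longrightarrow> \<bar>ys ! i\<bar> \<le> T"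
  shows "\<bar>mpoly_eval m R ys\<bar> \<le> (\<Sum>(c, e) \<leftarrow> R. \<bar>c\<bar>) * T ^ (\<Sum>(c, e) \<leftarrow> R. (\<Sum>i<m. e i))"
proof (induction R)
  case Nil then show ?case by (simp add: mpoly_eval_def)
next
  case (Cons ce R)
  obtain c e where ce: "ce = (c, e)" by fastforce
  define CR where "CR = (\<Sum>(c, e) \<leftarrow> R. \<bar>c\<bar>)"
  define ER where "ER = (\<Sum>(c, e) \<leftarrow> R. (\<Sum>i<m. e i))"
  have CR0: "CR \<ge> 0" unfolding CR_def by (induction R) auto
  have ev: "mpoly_eval m (ce # R) ys = c * (\<Prod>i<m. (ys ! i) ^ e i) + mpoly_eval m R ys"
    by (simp add: mpoly_eval_def ce)
  have pb: "\<bar>\<Prod>i<m. (ys ! i) ^ e i\<bar> \<le> T ^ (\<Sum>i<m. e i)"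
  proof -
    have "\<bar>\<Prod>i<m. (ys ! i) ^ e i\<bar> = (\<Prod>i<m. \<bar>ys ! i\<bar> ^ e i)" by (simp add: abs_prod power_abs)
    also have "\<dots> \<le> (\<Prod>i<m. T ^ e i)" using ys by (intro prod_mono conjI power_mono) auto
    also have "\<dots> = T ^ (\<Sum>i<m. e i)" by (simp add: power_sum)
    finally show ?thesis .
  qed
  have "\<bar>mpoly_eval m (ce # R) ys\<bar> \<le> \<bar>c\<bar> * T ^ (\<Sum>i<m. e i) + CR * T ^ ER"
  proof -
    have "\<bar>c * (\<Prod>i<m. (ys ! i) ^ e i)\<bar> \<le> \<bar>c\<bar> * T ^ (\<Sum>i<m. e i)"
      using pb by (simp add: abs_mult mult_left_mono)
    then show ?thesis using Cons unfolding ev CR_def ER_def by linarith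
  qed
  also have "\<dots> \<le> \<bar>c\<bar> * T ^ ((\<Sum>i<m. e i) + ER) + CR * T ^ ((\<Sum>i<m. e i) + ER)"
    using T CR0 by (intro add_mono mult_left_mono power_increasing) auto
  also have "\<dots> = (\<Sum>(c, e) \<leftarrow> ce # R. \<bar>c\<bar>) * T ^ (\<Sum>(c, e) \<leftarrow> ce # R. (\<Sum>i<m. e i))"
    unfolding CR_def ER_def ce by (simp add: algebra_simps)
  finally show ?case .
qed

lemma prod_list_le: "(\<forall>x\<in>set xs. x \<le> (T::nat)) \<Longrightarrow> prod_list xs \<le> T ^ length xs"
  by (induction xs) (auto intro: mult_le_mono)



theorem theorem5:
  fixes k l m s r e :: nat and a :: int
    and R :: "(int \<times> (nat \<Rightarrow> nat)) list"
    and Ps :: "int poly list" and es :: "nat list" and P :: "int poly"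
  assumes "k \<ge> 2" and "l \<ge> 2" and "m \<ge> 1"
    and "s \<le> r" and "r \<ge> 1"
    and "e \<ge> 1"
    and "length es = length Ps" and "\<forall>j\<in>set es. j \<ge> 1"
    and "distinct Ps" and "\<forall>Q\<in>set Ps. irreducible Q"
    and "P = [:-a, 1:] ^ e * (\<Prod>j<length Ps. (Ps ! j) ^ (es ! j))"
  shows "finite {(ns, x). length ns = r \<and> (\<forall>n\<in>set ns. n > 0) \<and> x \<in> S_set k l m a R \<and>
            poly P x = int ((\<Prod>i<s. fact (ns ! i)) * (\<Prod>i\<in>{s..<r}. dfact (ns ! i)))}"
proof -
  note sr = assms(4) and r1 = assms(5) and e1 = assms(6) and Pdef = assms(11)
  define Q where "Q = (\<Prod>j<length Ps. (Ps ! j) ^ (es ! j))"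
  define B :: nat where "B = 4 ^ ((k - 1) + r * (l - 1))"
  define CR :: int where "CR = (\<Sum>(c, e) \<leftarrow> R. \<bar>c\<bar>)"
  define ER where "ER = (\<Sum>(c, e) \<leftarrow> R. (\<Sum>i<m. e i))"
  define G where "G = m + ER"
  define A1 :: int where "A1 = \<bar>a\<bar> + CR + 1"
  define Cp :: int where "Cp = (\<Sum>i\<le>degree P. \<bar>coeff P i\<bar>)"
  define d where "d = degree P"
  define L :: int where "L = int B ^ (2 * G * d)"
  define K :: int where "K = (Cp * A1 ^ d) ^ 2"
  have B1: "B \<ge> 1" unfolding B_def by (intro one_le_power) simp
  have CR0: "CR \<ge> 0" unfolding CR_def by (induction R) auto
  have A1: "A1 \<ge> 1" unfolding A1_def using CR0 by simp
  have Cp0: "Cp \<ge> 0" unfolding Cp_def by (intro sum_nonneg) auto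
  obtain n0 where n0: "\<And>n. int (fact n) \<le> K * L ^ n \<Longrightarrow> n < n0"
    using growth_int by blast
  define M :: int where "M = A1 * int B ^ (G * n0)"
  let ?S = "{(ns, x). length ns = r \<and> (\<forall>n\<in>set ns. n > 0) \<and> x \<in> S_set k l m a R \<and>
            poly P x = int ((\<Prod>i<s. fact (ns ! i)) * (\<Prod>i\<in>{s..<r}. dfact (ns ! i)))}"
  have key: "(\<forall>j\<in>set ns. j < n0) \<and> \<bar>x\<bar> \<le> M" if mem: "(ns, x) \<in> ?S" for ns x
  proof -
    define N where "N = (\<Prod>i<s. fact (ns ! i)) * (\<Prod>i\<in>{s..<r}. dfact (ns ! i))"
    have len: "length ns = r" and xS: "x \<in> S_set k l m a R" and PN: "poly P x = int N"
      using mem unfolding N_def by auto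
    have ne: "set ns \<noteq> {}" using len r1 by auto
    define n where "n = Max (set ns)"
    have nin: "n \<in> set ns" unfolding n_def using ne by simp
    have le_n: "j \<le> n" if "j \<in> set ns" for j unfolding n_def using that by simp
    have ile: "ns ! i \<le> n" if "i < r" for i using le_n len that by simp
    obtain i0 where i0: "i0 < r" "ns ! i0 = n" using nin len by (metis in_set_conv_nth)
    have N0: "N > 0" unfolding N_def using dfact_pos by (simp add: prod_pos)
    have NF: "N dvd fact n ^ r"
    proof -
      have fd: "fact (ns ! i) dvd (fact n :: nat)" if "i < r" for i
        using ile[OF that] by (rule fact_dvd)
      have "(\<Prod>i<s. fact (ns ! i)) dvd (\<Prod>i<s. fact n :: nat)"
      proof (intro prod_dvd_prod)
        fix i assume "i \<in> {..<s}"
        then have "i < r" using sr by simp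
        then show "fact (ns ! i) dvd (fact n :: nat)" by (rule fd)
      qed
      moreover have "(\<Prod>i\<in>{s..<r}. dfact (ns ! i)) dvd (\<Prod>i\<in>{s..<r}. fact n)"
        using ile by (intro prod_dvd_prod) (meson atLeastLessThan_iff dfact_dvd_fact dvd_trans fact_dvd)
      ultimately have "N dvd fact n ^ s * fact n ^ (r - s)" unfolding N_def
        by (simp add: mult_dvd_mono)
      then show ?thesis using sr by (simp add: power_add[symmetric])
    qed
    have Nsq: "fact n \<le> N ^ 2"
    proof (cases "i0 < s")
      case True
      have "fact (ns ! i0) dvd (\<Prod>i<s. fact (ns ! i) :: nat)"
        using True by (intro dvd_prodI) auto
      then have "fact n dvd (\<Prod>i<s. fact (ns ! i) :: nat)" using i0 by simp
      then have "fact n dvd N" unfolding N_def by simp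
      then have "fact n \<le> N" using N0 by (simp add: dvd_imp_le)
      also have "\<dots> \<le> N ^ 2" using N0 by (simp add: power2_eq_square)
      finally show ?thesis .
    next
      case False
      have "dfact n dvd (\<Prod>i\<in>{s..<r}. dfact (ns ! i))" using False i0
        by (metis dvd_prodI finite_atLeastLessThan atLeastLessThan_iff not_less)
      then have "dfact n dvd N" unfolding N_def by simp
      then have "dfact n \<le> N" using N0 by (simp add: dvd_imp_le)
      then have "dfact n ^ 2 \<le> N ^ 2" by (simp add: power_mono)
      then show ?thesis using fact_le_dfact_sq[of n] by linarith
    qed
    obtain xs where xs: "length xs = m" "set xs \<subseteq> FkPl k l"
      and xdef: "x = int (prod_list xs) * mpoly_eval m R (map int xs) + a"
      using xS unfolding S_set_def by blast
    have "poly P x = (x - a) ^ e * poly Q x" unfolding Pdef Q_def by (simp add: poly_power)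
    moreover have "(x - a) dvd (x - a) ^ e" using e1 by (intro dvd_power) auto
    ultimately have "(x - a) dvd int N" using PN by (metis dvd_mult2)
    moreover have "x - a = int (prod_list xs) * mpoly_eval m R (map int xs)" using xdef by simp
    ultimately have "int (prod_list xs) dvd int N" using dvd_mult_left by metis
    then have pdN: "prod_list xs dvd N" by simp
    define T :: nat where "T = B ^ n"
    have T1: "T \<ge> 1" unfolding T_def using B1 by simp
    have xle: "y \<le> T" if "y \<in> set xs" for y
    proof -
      have "y dvd fact n ^ r" using prod_list_dvd[OF that] pdN NF dvd_trans by blast
      then show ?thesis using FkPl_bound[of y k l n r] xs that unfolding T_def B_def by auto
    qed
    have pl: "prod_list xs \<le> T ^ m" using prod_list_le[of xs T] xle xs by simp
    have mp: "\<bar>mpoly_eval m R (map int xs)\<bar> \<le> CR * int T ^ ER"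
      unfolding CR_def ER_def using T1 xle xs by (intro mpoly_bound) auto
    have xb: "\<bar>x\<bar> \<le> A1 * int T ^ G"
    proof -
      have "\<bar>x\<bar> \<le> int (prod_list xs) * \<bar>mpoly_eval m R (map int xs)\<bar> + \<bar>a\<bar>"
        unfolding xdef by (rule order.trans[OF abs_triangle_ineq]) (simp add: abs_mult)
      also have "\<dots> \<le> int T ^ m * (CR * int T ^ ER) + \<bar>a\<bar>"
        using pl mp by (intro add_mono mult_mono) auto
      also have "\<dots> = CR * int T ^ G + \<bar>a\<bar>" unfolding G_def by (simp add: power_add algebra_simps)
      also have "\<dots> \<le> CR * int T ^ G + \<bar>a\<bar> * int T ^ G + int T ^ G"
      proof -
        have "(1::int) \<le> int T ^ G" using T1 by simp
        then have "\<bar>a\<bar> * 1 \<le> \<bar>a\<bar> * int T ^ G" by (intro mult_left_mono) auto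
        then show ?thesis using \<open>(1::int) \<le> int T ^ G\<close> by linarith
      qed
      also have "\<dots> = A1 * int T ^ G" unfolding A1_def by (simp add: algebra_simps)
      finally show ?thesis .
    qed
    have TG: "int T ^ G = int B ^ (G * n)" unfolding T_def by (simp add: power_mult[symmetric] mult.commute)
    have "int N \<le> Cp * (max 1 \<bar>x\<bar>) ^ d"
      using poly_bound[of P x] PN unfolding Cp_def d_def by simp
    also have "\<dots> \<le> Cp * (A1 * int T ^ G) ^ d"
    proof -
      have "(1::int) \<le> int T ^ G" using T1 by simp
      then have "1 * 1 \<le> A1 * int T ^ G" using A1 by (intro mult_mono) auto
      then have "1 \<le> A1 * int T ^ G" by simp
      then have "max 1 \<bar>x\<bar> \<le> A1 * int T ^ G" using xb by simp
      then show ?thesis using Cp0 by (intro mult_left_mono power_mono) auto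
    qed
    finally have Nb: "int N \<le> Cp * A1 ^ d * int B ^ (G * d * n)"
      using TG by (simp add: power_mult_distrib power_mult[symmetric] mult.commute mult.left_commute)
    have "int (fact n) \<le> int N ^ 2" using Nsq by (metis of_nat_le_iff of_nat_power)
    also have "\<dots> \<le> (Cp * A1 ^ d * int B ^ (G * d * n)) ^ 2" using Nb by (intro power_mono) auto
    also have "\<dots> = K * L ^ n"
    proof -
      have "G * d * n * 2 = 2 * G * d * n" by simp
      then have "(int B ^ (G * d * n)) ^ 2 = (int B ^ (2 * G * d)) ^ n"
        by (metis power_mult)
      then show ?thesis unfolding K_def L_def by (simp add: power_mult_distrib)
    qed
    finally have "n < n0" by (rule n0)
    then have "\<forall>j\<in>set ns. j < n0" using le_n by fastforce
    moreover have "\<bar>x\<bar> \<le> M"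
    proof -
      have "int T ^ G \<le> int B ^ (G * n0)" unfolding TG using B1 \<open>n < n0\<close>
        by (intro power_increasing) auto
      then have "A1 * int T ^ G \<le> M" using A1 unfolding M_def by (intro mult_left_mono) auto
      then show ?thesis using xb by linarith
    qed
    ultimately show ?thesis by blast
  qed
  have "?S \<subseteq> {ns. set ns \<subseteq> {..<n0} \<and> length ns = r} \<times> {-M..M}"
  proof
    fix z assume z: "z \<in> ?S"
    obtain ns x where zz: "z = (ns, x)" by fastforce
    have mem: "(ns, x) \<in> ?S" using z zz by simp
    then have len: "length ns = r" by simp
    from key[OF mem] have "\<forall>j\<in>set ns. j < n0" "\<bar>x\<bar> \<le> M" by auto
    then show "z \<in> {ns. set ns \<subseteq> {..<n0} \<and> length ns = r} \<times> {-M..M}"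
      using zz len by auto
  qed
  moreover have "finite ({ns. set ns \<subseteq> {..<n0} \<and> length ns = r} \<times> {-M..M})"
    by (intro finite_cartesian_product finite_lists_length_eq) auto
  ultimately show ?thesis by (rule finite_subset)
qed


end
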